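(* Let $\mathbb{X}$ be a real Banach space such that $\operatorname{Sm}\mathbb{X}$ is a dense $G_\delta$ subset of $\mathbb{X}$, and let $T:\mathbb{X}\to\mathbb{X}$ be a non-zero bounded linear operator. The following are equivalent: (i) $T$ preserves Birkhoff–James orthogonality at each point of $\operatorname{Sm}\mathbb{X}$; (ii) $T$ preserves Birkhoff–James orthogonality at each point of some dense subset $U$ of $\mathbb{X}$; (iii) $T$ preserves Birkhoff–James orthogonality at each point of some hyperplane $H$ not passing through the origin; (iv) $T$ preserves $\rho_+$-orthogonality at each point of $\operatorname{Sm}\mathbb{X}$; (v) $T$ preserves $\rho_-$-orthogonality at each point of $\operatorname{Sm}\mathbb{X}$; (vi) $T$ preserves $\rho$-orthogonality at each point of $\operatorname{Sm}\mathbb{X}$; (vii) $T$ is a scalar multiple of an isometry.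
   Context: $u\perp_B v$ means $\|u+\lambda v\|\ge\|u\|$ for all real $\lambda$; $T$ preserves Birkhoff–James orthogonality at $x$ if $x\perp_B v\Rightarrow Tx\perp_B Tv$ for all $v$. Norm derivatives: $\rho'_\pm(u,v)=\|u\|\lim_{t\to0^\pm}\frac{\|u+tv\|-\|u\|}{t}$ and $\rho'(u,v)=\frac12(\rho'_+(u,v)+\rho'_-(u,v))$. $u\perp_{\rho_\pm}v$ iff $\rho'_\pm(u,v)=0$, and $u\perp_\rho v$ iff $\rho'(u,v)=0$. $T$ preserves $\rho_\pm$- (resp. $\rho$-) orthogonality at $x$ if $x\perp_{\rho_\pm}v\Rightarrow Tx\perp_{\rho_\pm}Tv$ (resp. with $\rho$) for all $v$. For non-zero $z$, $J(z)=\{f\in\mathbb{X}^*:\|f\|=1,\ f(z)=\|z\|\}$; $z$ is smooth if $J(z)$ is a singleton; $\operatorname{Sm}\mathbb{X}$ is the set of smooth points. A hyperplane not passing through the origin is $\{x:\varphi(x)=c\}$ with $\varphi$ a non-zero bounded linear functional and $c\ne0$. Scalar multiple of an isometry: $\|Tx\|=\lambda\|x\|$ for all $x$, for a constant $\lambda$. *)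

theory Defs
  imports "HOL-Analysis.Analysis"
begin

definition bj_orth :: "'a::real_normed_vector \<Rightarrow> 'a \<Rightarrow> bool" where
  "bj_orth u v \<longleftrightarrow> (\<forall>l::real. norm (u + l *\<^sub>R v) \<ge> norm u)"

definition preserves_bj_at :: "('a::real_normed_vector \<Rightarrow> 'b::real_normed_vector) \<Rightarrow> 'a \<Rightarrow> bool" where
  "preserves_bj_at T x \<longleftrightarrow> (\<forall>v. bj_orth x v \<longrightarrow> bj_orth (T x) (T v))"

text \<open>Norm derivatives (the one-sided limits always exist by convexity of the norm).\<close>
definition rho_plus :: "'a::real_normed_vector \<Rightarrow> 'a \<Rightarrow> real" where
  "rho_plus u v = norm u * Lim (at_right 0) (\<lambda>t. (norm (u + t *\<^sub>R v) - norm u) / t)"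

definition rho_minus :: "'a::real_normed_vector \<Rightarrow> 'a \<Rightarrow> real" where
  "rho_minus u v = norm u * Lim (at_left 0) (\<lambda>t. (norm (u + t *\<^sub>R v) - norm u) / t)"

definition rho :: "'a::real_normed_vector \<Rightarrow> 'a \<Rightarrow> real" where
  "rho u v = (rho_plus u v + rho_minus u v) / 2"

definition preserves_rho_plus_at :: "('a::real_normed_vector \<Rightarrow> 'b::real_normed_vector) \<Rightarrow> 'a \<Rightarrow> bool" where
  "preserves_rho_plus_at T x \<longleftrightarrow> (\<forall>v. rho_plus x v = 0 \<longrightarrow> rho_plus (T x) (T v) = 0)"

definition preserves_rho_minus_at :: "('a::real_normed_vector \<Rightarrow> 'b::real_normed_vector) \<Rightarrow> 'a \<Rightarrow> bool" where
  "preserves_rho_minus_at T x \<longleftrightarrow> (\<forall>v. rho_minus x v = 0 \<longrightarrow> rho_minus (T x) (T v) = 0)"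

definition preserves_rho_at :: "('a::real_normed_vector \<Rightarrow> 'b::real_normed_vector) \<Rightarrow> 'a \<Rightarrow> bool" where
  "preserves_rho_at T x \<longleftrightarrow> (\<forall>v. rho x v = 0 \<longrightarrow> rho (T x) (T v) = 0)"

definition supp_funcs :: "'a::real_normed_vector \<Rightarrow> ('a \<Rightarrow> real) set" where
  "supp_funcs z = {f. bounded_linear f \<and> onorm f = 1 \<and> f z = norm z}"

definition smooth_points :: "'a::real_normed_vector set" where
  "smooth_points = {z. z \<noteq> 0 \<and> (\<exists>f. supp_funcs z = {f})}"

definition affine_hyperplane_off0 :: "'a::real_normed_vector set \<Rightarrow> bool" where
  "affine_hyperplane_off0 H \<longleftrightarrow>
     (\<exists>\<phi> c. bounded_linear \<phi> \<and> \<phi> \<noteq> (\<lambda>x. 0) \<and> c \<noteq> (0::real) \<and> H = {x. \<phi> x = c})"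

end

theory Submission
  imports Defs
begin


lemma HB_ext:
  fixes G0 :: "('a::real_normed_vector \<times> real) set"
  assumes sub0: "subspace G0" and dom0: "\<forall>(y,r)\<in>G0. r \<le> norm y"
  shows "\<exists>h. linear h \<and> (\<forall>y. h y \<le> norm y) \<and> (\<forall>(y,r)\<in>G0. h y = r)"
proof -
  define A where "A = {G. subspace G \<and> G0 \<subseteq> G \<and> (\<forall>(y,r)\<in>G. r \<le> norm y)}"
  have "\<exists>M\<in>A. \<forall>X\<in>A. M \<subseteq> X \<longrightarrow> X = M"
  proof (rule Zorn_Lemma2, intro ballI)
    fix C assume C: "C \<in> chains A"
    show "\<exists>U\<in>A. \<forall>X\<in>C. X \<subseteq> U"
    proof (cases "C = {}")
      case True
      then show ?thesis using sub0 dom0 unfolding A_def by auto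
    next
      case False
      have CA: "C \<subseteq> A" and ch: "\<And>X Y. X \<in> C \<Longrightarrow> Y \<in> C \<Longrightarrow> X \<subseteq> Y \<or> Y \<subseteq> X"
        using C unfolding chains_def chain_subset_def by auto
      obtain X0 where X0: "X0 \<in> C" using False by auto
      have "subspace (\<Union>C)"
        unfolding subspace_def
      proof (intro conjI ballI allI)
        show "0 \<in> \<Union>C" using X0 CA unfolding A_def subspace_def by blast
      next
        fix x y assume "x \<in> \<Union>C" "y \<in> \<Union>C"
        then obtain X Y where XY: "X \<in> C" "Y \<in> C" "x \<in> X" "y \<in> Y" by auto
        from ch[OF XY(1,2)] show "x + y \<in> \<Union>C"
        proof
          assume "X \<subseteq> Y"
          then have "x + y \<in> Y" using XY CA unfolding A_def subspace_def by blast
          then show ?thesis using XY by blast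
        next
          assume "Y \<subseteq> X"
          then have "x + y \<in> X" using XY CA unfolding A_def subspace_def by blast
          then show ?thesis using XY by blast
        qed
      next
        fix c x assume "x \<in> \<Union>C"
        then obtain X where "X \<in> C" "x \<in> X" by auto
        then have "c *\<^sub>R x \<in> X" using CA unfolding A_def subspace_def by blast
        then show "c *\<^sub>R x \<in> \<Union>C" using \<open>X \<in> C\<close> by blast
      qed
      moreover have "G0 \<subseteq> \<Union>C" using X0 CA unfolding A_def by blast
      moreover have "\<forall>(y,r)\<in>\<Union>C. r \<le> norm y" using CA unfolding A_def by blast
      ultimately show ?thesis unfolding A_def by blast
    qed
  qed
  then obtain M where MA: "M \<in> A" and Mmax: "\<And>X. X \<in> A \<Longrightarrow> M \<subseteq> X \<Longrightarrow> X = M" by blast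
  have subM: "subspace M" and G0M: "G0 \<subseteq> M" and domM: "\<And>y r. (y,r) \<in> M \<Longrightarrow> r \<le> norm y"
    using MA unfolding A_def by auto
  have addM: "\<And>y r z s. (y,r) \<in> M \<Longrightarrow> (z,s) \<in> M \<Longrightarrow> (y+z, r+s) \<in> M"
    using subM unfolding subspace_def by (metis plus_prod_def fst_conv snd_conv prod.collapse)
  have scM: "\<And>y r k. (y,r) \<in> M \<Longrightarrow> (k *\<^sub>R y, k * r) \<in> M"
  proof -
    fix y r k assume "(y,r) \<in> M"
    then have "k *\<^sub>R (y,r) \<in> M" using subM unfolding subspace_def by blast
    then show "(k *\<^sub>R y, k * r) \<in> M" by simp
  qed
  have zM: "(0,0) \<in> M" using subM unfolding subspace_def by (simp add: zero_prod_def)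
  have uniq: "\<And>y r s. (y,r) \<in> M \<Longrightarrow> (y,s) \<in> M \<Longrightarrow> r = s"
  proof -
    fix y r s assume a: "(y,r) \<in> M" "(y,s) \<in> M"
    have "(-1 *\<^sub>R y, -1 * s) \<in> M" by (rule scM[OF a(2)])
    then have "(y + -1 *\<^sub>R y, r + -1 * s) \<in> M" by (rule addM[OF a(1)])
    then have "r - s \<le> 0" using domM by fastforce
    have "(-1 *\<^sub>R y, -1 * r) \<in> M" by (rule scM[OF a(1)])
    then have "(y + -1 *\<^sub>R y, s + -1 * r) \<in> M" by (rule addM[OF a(2)])
    then have "s - r \<le> 0" using domM by fastforce
    with \<open>r - s \<le> 0\<close> show "r = s" by simp
  qed
  have total: "\<forall>y. \<exists>r. (y,r) \<in> M"
  proof (rule ccontr)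
    assume "\<not> (\<forall>y. \<exists>r. (y,r) \<in> M)"
    then obtain x0 where x0: "\<And>r. (x0,r) \<notin> M" by blast
    define B where "B = (\<lambda>(y,r). r - norm (y - x0)) ` M"
    define c where "c = Sup B"
    have Bne: "B \<noteq> {}" using zM unfolding B_def by blast
    have lowb: "\<And>z s b. (z,s) \<in> M \<Longrightarrow> b \<in> B \<Longrightarrow> b \<le> norm (z + x0) - s"
    proof -
      fix z s b assume zs: "(z,s) \<in> M" and "b \<in> B"
      then obtain y r where yr: "(y,r) \<in> M" "b = r - norm (y - x0)" unfolding B_def by auto
      have "r + s \<le> norm (y + z)" using domM[OF addM[OF yr(1) zs]] .
      also have "\<dots> \<le> norm (y - x0) + norm (z + x0)"
        using norm_triangle_ineq[of "y - x0" "z + x0"] by simp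
      finally show "b \<le> norm (z + x0) - s" using yr by simp
    qed
    have bdd: "bdd_above B" using lowb[OF zM] unfolding bdd_above_def by blast
    have c_ge: "\<And>y r. (y,r) \<in> M \<Longrightarrow> r - norm (y - x0) \<le> c"
      unfolding c_def by (rule cSup_upper[OF _ bdd]) (force simp: B_def)
    have c_le: "\<And>z s. (z,s) \<in> M \<Longrightarrow> c \<le> norm (z + x0) - s"
      unfolding c_def by (rule cSup_least[OF Bne]) (rule lowb)
    define M' where "M' = span (insert (x0, c) M)"
    have "M' \<in> A" unfolding A_def
    proof (intro CollectI conjI)
      show "subspace M'" unfolding M'_def by simp
      show "G0 \<subseteq> M'" using G0M span_superset unfolding M'_def by blast
      show "\<forall>(y,r)\<in>M'. r \<le> norm y"
      proof (clarify)
        fix y r assume "(y,r) \<in> M'"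
        then obtain k where "(y,r) - k *\<^sub>R (x0,c) \<in> span M"
          unfolding M'_def span_breakdown_eq by blast
        moreover have "span M = M" using subM by (metis span_eq_iff)
        ultimately have mem: "(y - k *\<^sub>R x0, r - k * c) \<in> M" by simp
        define m where "m = y - k *\<^sub>R x0"
        define s where "s = r - k * c"
        have ms: "(m, s) \<in> M" using mem m_def s_def by simp
        have yr: "y = m + k *\<^sub>R x0" "r = s + k * c" using m_def s_def by auto
        consider "k = 0" | "k > 0" | "k < 0" by linarith
        then show "r \<le> norm y"
        proof cases
          case 1 then show ?thesis using domM[OF ms] yr by simp
        next
          case 2
          have "c \<le> norm ((1/k) *\<^sub>R m + x0) - (1/k) * s"
            using c_le[OF scM[OF ms, of "1/k"]] .
          then have "k * c \<le> k * (norm ((1/k) *\<^sub>R m + x0) - (1/k) * s)"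
            using 2 by (simp add: mult_left_mono)
          also have "\<dots> = norm (k *\<^sub>R ((1/k) *\<^sub>R m + x0)) - s"
            using 2 by (simp add: right_diff_distrib)
          also have "k *\<^sub>R ((1/k) *\<^sub>R m + x0) = m + k *\<^sub>R x0"
            using 2 by (simp add: scaleR_add_right)
          finally show ?thesis using yr by simp
        next
          case 3
          define j where "j = - k"
          have j: "j > 0" using 3 j_def by simp
          have "(1/j) * s - norm ((1/j) *\<^sub>R m - x0) \<le> c"
            using c_ge[OF scM[OF ms, of "1/j"]] .
          then have "j * ((1/j) * s - norm ((1/j) *\<^sub>R m - x0)) \<le> j * c"
            using j by (simp add: mult_left_mono)
          then have "s - norm (j *\<^sub>R ((1/j) *\<^sub>R m - x0)) \<le> j * c"
            using j by (simp add: right_diff_distrib)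
          moreover have "j *\<^sub>R ((1/j) *\<^sub>R m - x0) = m - j *\<^sub>R x0"
            using j by (simp add: scaleR_diff_right)
          moreover have "m - j *\<^sub>R x0 = m + k *\<^sub>R x0" by (simp add: j_def)
          moreover have "j * c = - (k * c)" by (simp add: j_def)
          ultimately show ?thesis using yr by simp
        qed
      qed
    qed
    moreover have "M \<subseteq> M'" unfolding M'_def using span_superset by blast
    ultimately have "M' = M" using Mmax by blast
    moreover have "(x0, c) \<in> M'" unfolding M'_def using span_superset by blast
    ultimately show False using x0 by blast
  qed
  define h where "h y = (SOME r. (y,r) \<in> M)" for y
  have hM: "\<And>y. (y, h y) \<in> M" unfolding h_def using total by (metis someI_ex)
  have "linear h"
  proof (rule linearI)
    fix x y show "h (x + y) = h x + h y" using uniq[OF hM addM[OF hM hM]] .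
  next
    fix c x show "h (c *\<^sub>R x) = c *\<^sub>R h x" using uniq[OF hM scM[OF hM]] by simp
  qed
  moreover have "\<forall>y. h y \<le> norm y" using domM[OF hM] by blast
  moreover have "\<forall>(y,r)\<in>G0. h y = r" using G0M uniq[OF hM] by blast
  ultimately show ?thesis by blast
qed




definition Q :: "'a::real_normed_vector \<Rightarrow> 'a \<Rightarrow> real \<Rightarrow> real" where
  "Q u v t = (norm (u + t *\<^sub>R v) - norm u) / t"

definition Dp :: "'a::real_normed_vector \<Rightarrow> 'a \<Rightarrow> real" where
  "Dp u v = Inf (Q u v ` {0<..})"

definition Dm :: "'a::real_normed_vector \<Rightarrow> 'a \<Rightarrow> real" where
  "Dm u v = Sup (Q u v ` {..<0})"

lemma Q_mono_pos:
  assumes "0 < s" "s < t"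
  shows "Q u v s \<le> Q u v t"
proof -
  have e: "t *\<^sub>R (u + s *\<^sub>R v) = (t - s) *\<^sub>R u + s *\<^sub>R (u + t *\<^sub>R v)"
    by (simp add: algebra_simps)
  have "norm (t *\<^sub>R (u + s *\<^sub>R v)) \<le> norm ((t - s) *\<^sub>R u) + norm (s *\<^sub>R (u + t *\<^sub>R v))"
    unfolding e by (rule norm_triangle_ineq)
  then have "t * norm (u + s *\<^sub>R v) \<le> (t - s) * norm u + s * norm (u + t *\<^sub>R v)"
    using assms by simp
  then have "(norm (u + s *\<^sub>R v) - norm u) * t \<le> (norm (u + t *\<^sub>R v) - norm u) * s"
    by (simp add: algebra_simps)
  then show ?thesis using assms unfolding Q_def
    by (simp add: divide_simps mult.commute)
qed

lemma Q_mono_mixed: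
  assumes "s < 0" "0 < t"
  shows "Q u v s \<le> Q u v t"
proof -
  have e: "(t - s) *\<^sub>R u = t *\<^sub>R (u + s *\<^sub>R v) + (- s) *\<^sub>R (u + t *\<^sub>R v)"
    by (simp add: algebra_simps)
  have "norm ((t - s) *\<^sub>R u) \<le> norm (t *\<^sub>R (u + s *\<^sub>R v)) + norm ((- s) *\<^sub>R (u + t *\<^sub>R v))"
    unfolding e by (rule norm_triangle_ineq)
  then have "(t - s) * norm u \<le> t * norm (u + s *\<^sub>R v) + (-s) * norm (u + t *\<^sub>R v)"
    using assms by simp
  then have "(norm (u + t *\<^sub>R v) - norm u) * s \<le> (norm (u + s *\<^sub>R v) - norm u) * t"
    by (simp add: algebra_simps)
  then show ?thesis using assms unfolding Q_def
    by (simp add: divide_simps mult.commute)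
qed

lemma Q_neg: "Q u (- v) (- t) = - Q u v t"
  unfolding Q_def by simp

lemma Q_mono:
  assumes "s \<noteq> 0" "t \<noteq> 0" "s < t"
  shows "Q u v s \<le> Q u v t"
proof -
  consider "0 < s" | "s < 0 \<and> 0 < t" | "t < 0" using assms by linarith
  then show ?thesis
  proof cases
    case 1 then show ?thesis using Q_mono_pos assms by blast
  next
    case 2 then show ?thesis using Q_mono_mixed by blast
  next
    case 3
    have "Q u (-v) (-t) \<le> Q u (-v) (-s)" using Q_mono_pos[of "-t" "-s" u "-v"] 3 assms by simp
    then show ?thesis by (simp add: Q_neg)
  qed
qed

lemma Q_bound: "\<bar>Q u v t\<bar> \<le> norm v"
proof (cases "t = 0")
  case True then show ?thesis by (simp add: Q_def)
next
  case False
  have "\<bar>norm (u + t *\<^sub>R v) - norm u\<bar> \<le> \<bar>t\<bar> * norm v"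
    using norm_triangle_ineq3[of "u + t *\<^sub>R v" u] by simp
  then show ?thesis using False unfolding Q_def
    by (simp add: abs_divide divide_le_eq mult.commute)
qed

lemma Q_diff: "\<bar>Q u v t - Q x v t\<bar> \<le> 2 * norm (u - x) / \<bar>t\<bar>"
proof (cases "t = 0")
  case True then show ?thesis by (simp add: Q_def)
next
  case False
  have a: "\<bar>norm (u + t *\<^sub>R v) - norm (x + t *\<^sub>R v)\<bar> \<le> norm (u - x)"
    using norm_triangle_ineq3[of "u + t *\<^sub>R v" "x + t *\<^sub>R v"] by simp
  have b: "\<bar>norm u - norm x\<bar> \<le> norm (u - x)" by (rule norm_triangle_ineq3)
  have "Q u v t - Q x v t = ((norm (u + t *\<^sub>R v) - norm (x + t *\<^sub>R v)) - (norm u - norm x)) / t"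
    unfolding Q_def using False by (simp add: diff_divide_distrib)
  then have "\<bar>Q u v t - Q x v t\<bar> = \<bar>(norm (u + t *\<^sub>R v) - norm (x + t *\<^sub>R v)) - (norm u - norm x)\<bar> / \<bar>t\<bar>"
    by (simp add: abs_divide)
  also have "\<dots> \<le> 2 * norm (u - x) / \<bar>t\<bar>"
    using a b by (intro divide_right_mono) auto
  finally show ?thesis .
qed

lemma bdd_below_Q: "bdd_below (Q u v ` A)"
proof -
  have "- norm v \<le> Q u v x" for x using Q_bound[of u v x] abs_le_iff[of "Q u v x" "norm v"] by linarith
  then have "\<forall>x\<in>Q u v ` A. - norm v \<le> x" by blast
  then show ?thesis unfolding bdd_below_def by blast
qed

lemma bdd_above_Q: "bdd_above (Q u v ` A)"
proof -
  have "Q u v x \<le> norm v" for x using Q_bound[of u v x] abs_le_iff[of "Q u v x" "norm v"] by linarith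
  then have "\<forall>x\<in>Q u v ` A. x \<le> norm v" by blast
  then show ?thesis unfolding bdd_above_def by blast
qed

lemma Dp_le: "0 < t \<Longrightarrow> Dp u v \<le> Q u v t"
  unfolding Dp_def by (rule cInf_lower[OF _ bdd_below_Q]) simp

lemma Dm_ge: "s < 0 \<Longrightarrow> Q u v s \<le> Dm u v"
  unfolding Dm_def by (rule cSup_upper[OF _ bdd_above_Q]) simp

lemma Dm_le_Q: "0 < t \<Longrightarrow> Dm u v \<le> Q u v t"
  unfolding Dm_def
proof (rule cSup_least)
  show "Q u v ` {..<0} \<noteq> {}" by auto
next
  fix x assume t: "0 < t" and "x \<in> Q u v ` {..<0}"
  then obtain s where s: "s < 0" "x = Q u v s" by auto
  then show "x \<le> Q u v t" using Q_mono[of s t u v] t by simp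
qed

lemma Dm_le_Dp: "Dm u v \<le> Dp u v"
  unfolding Dp_def
  by (rule cInf_greatest) (auto intro: Dm_le_Q)

lemma Dp_approx: "0 < e \<Longrightarrow> \<exists>t>0. Q u v t < Dp u v + e"
proof -
  assume "0 < e"
  have "Inf (Q u v ` {0<..}) < Dp u v + e" using \<open>0 < e\<close> by (simp add: Dp_def)
  from cInf_lessD[OF _ this] show ?thesis by auto
qed

lemma Dm_approx: "0 < e \<Longrightarrow> \<exists>s<0. Dm u v - e < Q u v s"
proof -
  assume "0 < e"
  have "Dm u v - e < Sup (Q u v ` {..<0})" using \<open>0 < e\<close> by (simp add: Dm_def)
  from less_cSupD[OF _ this] show ?thesis by auto
qed

lemma Dp_tendsto: "(Q u v \<longlongrightarrow> Dp u v) (at_right 0)"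
proof (rule order_tendstoI)
  fix a assume a: "a < Dp u v"
  show "\<forall>\<^sub>F t in at_right 0. a < Q u v t"
  proof (rule eventually_mono[OF eventually_at_right_real[of 0 1]])
    fix t :: real assume "t \<in> {0<..<1}"
    then have "Dp u v \<le> Q u v t" by (intro Dp_le) simp
    then show "a < Q u v t" using a by simp
  qed simp
next
  fix a assume "Dp u v < a"
  then obtain t0 where t0: "t0 > 0" "Q u v t0 < a" using Dp_approx[of "a - Dp u v" u v] by auto
  show "\<forall>\<^sub>F t in at_right 0. Q u v t < a"
  proof (rule eventually_mono[OF eventually_at_right_real[OF t0(1)]])
    fix t :: real assume "t \<in> {0<..<t0}"
    then have "Q u v t \<le> Q u v t0" by (intro Q_mono) auto
    then show "Q u v t < a" using t0 by simp
  qed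
qed

lemma Dm_tendsto: "(Q u v \<longlongrightarrow> Dm u v) (at_left 0)"
proof (rule order_tendstoI)
  fix a assume a: "Dm u v < a"
  show "\<forall>\<^sub>F t in at_left 0. Q u v t < a"
  proof (rule eventually_mono[OF eventually_at_left_real[of "-1" 0]])
    fix t :: real assume "t \<in> {-1<..<0}"
    then have "Q u v t \<le> Dm u v" by (intro Dm_ge) simp
    then show "Q u v t < a" using a by simp
  qed simp
next
  fix a assume "a < Dm u v"
  then obtain s0 where s0: "s0 < 0" "a < Q u v s0" using Dm_approx[of "Dm u v - a" u v] by auto
  show "\<forall>\<^sub>F t in at_left 0. a < Q u v t"
  proof (rule eventually_mono[OF eventually_at_left_real[OF s0(1)]])
    fix t :: real assume "t \<in> {s0<..<0}"
    then have "Q u v s0 \<le> Q u v t" by (intro Q_mono) auto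
    then show "a < Q u v t" using s0 by simp
  qed
qed

lemma rho_plus_eq: "rho_plus u v = norm u * Dp u v"
proof -
  have "(\<lambda>t. (norm (u + t *\<^sub>R v) - norm u) / t) = Q u v" by (simp add: Q_def fun_eq_iff)
  moreover have "Lim (at_right 0) (Q u v) = Dp u v" by (rule tendsto_Lim[OF _ Dp_tendsto]) simp
  ultimately show ?thesis unfolding rho_plus_def by simp
qed

lemma rho_minus_eq: "rho_minus u v = norm u * Dm u v"
proof -
  have "(\<lambda>t. (norm (u + t *\<^sub>R v) - norm u) / t) = Q u v" by (simp add: Q_def fun_eq_iff)
  moreover have "Lim (at_left 0) (Q u v) = Dm u v" by (rule tendsto_Lim[OF _ Dm_tendsto]) simp
  ultimately show ?thesis unfolding rho_minus_def by simp
qed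

lemma bj_of_D:
  assumes "Dm u v \<le> 0" "0 \<le> Dp u v"
  shows "bj_orth u v"
  unfolding bj_orth_def
proof
  fix l :: real
  consider "l = 0" | "l > 0" | "l < 0" by linarith
  then show "norm u \<le> norm (u + l *\<^sub>R v)"
  proof cases
    case 1 then show ?thesis by simp
  next
    case 2
    then have "0 \<le> Q u v l" using Dp_le[OF 2, of u v] assms by linarith
    then show ?thesis using 2 unfolding Q_def by (simp add: zero_le_divide_iff)
  next
    case 3
    then have "Q u v l \<le> 0" using Dm_ge[OF 3, of u v] assms by linarith
    then show ?thesis using 3 unfolding Q_def by (simp add: divide_le_0_iff)
  qed
qed

lemma bj_zero: "bj_orth 0 v"
  unfolding bj_orth_def by simp

lemma supp_props:
  assumes "f \<in> supp_funcs z"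
  shows "bounded_linear f" "\<And>y. \<bar>f y\<bar> \<le> norm y" "f z = norm z"
proof -
  show bl: "bounded_linear f" using assms by (simp add: supp_funcs_def)
  show "f z = norm z" using assms by (simp add: supp_funcs_def)
  fix y show "\<bar>f y\<bar> \<le> norm y" using onorm[OF bl, of y] assms by (simp add: supp_funcs_def)
qed

lemma supp_bj:
  assumes "f \<in> supp_funcs z" "f v = 0"
  shows "bj_orth z v"
  unfolding bj_orth_def
proof
  fix l :: real
  interpret bounded_linear f using supp_props(1)[OF assms(1)] .
  have "f (z + l *\<^sub>R v) = norm z" using assms supp_props(3)[OF assms(1)] by (simp add: add scale)
  moreover have "f (z + l *\<^sub>R v) \<le> norm (z + l *\<^sub>R v)"
    using supp_props(2)[OF assms(1)] abs_le_D1 by blast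
  ultimately show "norm z \<le> norm (z + l *\<^sub>R v)" by simp
qed

lemma supp_Q:
  assumes "f \<in> supp_funcs u"
  shows "0 < t \<Longrightarrow> f v \<le> Q u v t" "t < 0 \<Longrightarrow> Q u v t \<le> f v"
proof -
  interpret bounded_linear f using supp_props(1)[OF assms(1)] .
  have "f (u + t *\<^sub>R v) \<le> norm (u + t *\<^sub>R v)"
    using supp_props(2)[OF assms(1)] abs_le_D1 by blast
  then have *: "t * f v \<le> norm (u + t *\<^sub>R v) - norm u"
    using supp_props(3)[OF assms(1)] by (simp add: add scale)
  show "0 < t \<Longrightarrow> f v \<le> Q u v t" using * unfolding Q_def by (simp add: le_divide_eq mult.commute)
  show "t < 0 \<Longrightarrow> Q u v t \<le> f v" using * unfolding Q_def by (simp add: divide_le_eq mult.commute)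
qed

lemma supp_of_linear:
  assumes "linear h" "\<forall>y. h y \<le> norm y" "h x = norm x" "x \<noteq> 0"
  shows "h \<in> supp_funcs x"
proof -
  have ab: "\<bar>h y\<bar> \<le> norm y" for y
  proof -
    have "h (- y) = - h y" using assms(1) by (simp add: linear_neg)
    then show ?thesis using assms(2) spec[OF assms(2), of "- y"] by (simp add: abs_le_iff)
  qed
  have bl: "bounded_linear h"
    by (rule bounded_linear_intro[where K=1]) (use assms(1) ab in \<open>auto simp: linear_add linear_scale\<close>)
  have "onorm h \<le> 1" by (rule onorm_bound) (use ab in auto)
  moreover have "norm (h x) / norm x \<le> onorm h" by (rule le_onorm[OF bl])
  then have "1 \<le> onorm h" using assms(3,4) by simp
  ultimately show ?thesis using bl assms(3) by (simp add: supp_funcs_def)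
qed

lemma J_exists:
  assumes "u \<noteq> 0"
  shows "\<exists>g. g \<in> supp_funcs u"
proof -
  define G0 where "G0 = range (\<lambda>a::real. (a *\<^sub>R u, a * norm u))"
  have "subspace G0" unfolding subspace_def G0_def
  proof (intro conjI ballI allI)
    show "0 \<in> range (\<lambda>a::real. (a *\<^sub>R u, a * norm u))" by (rule range_eqI[of _ _ 0]) (simp add: zero_prod_def)
  next
    fix x y assume "x \<in> range (\<lambda>a::real. (a *\<^sub>R u, a * norm u))" "y \<in> range (\<lambda>a::real. (a *\<^sub>R u, a * norm u))"
    then obtain a b where "x = (a *\<^sub>R u, a * norm u)" "y = (b *\<^sub>R u, b * norm u)" by auto
    then show "x + y \<in> range (\<lambda>a::real. (a *\<^sub>R u, a * norm u))"
      by (intro range_eqI[of _ _ "a + b"]) (simp add: algebra_simps)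
  next
    fix c x assume "x \<in> range (\<lambda>a::real. (a *\<^sub>R u, a * norm u))"
    then obtain a where "x = (a *\<^sub>R u, a * norm u)" by auto
    then show "c *\<^sub>R x \<in> range (\<lambda>a::real. (a *\<^sub>R u, a * norm u))"
      by (intro range_eqI[of _ _ "c * a"]) simp
  qed
  moreover have "\<forall>(y,r)\<in>G0. r \<le> norm y" unfolding G0_def by (auto intro!: mult_right_mono)
  ultimately obtain h where h: "linear h" "\<forall>y. h y \<le> norm y" "\<forall>(y,r)\<in>G0. h y = r"
    using HB_ext by blast
  have "(u, norm u) \<in> G0" unfolding G0_def by (rule range_eqI[of _ _ 1]) simp
  then have "h u = norm u" using h(3) by auto
  then show ?thesis using supp_of_linear[OF h(1,2) _ assms] by blast
qed




lemma J_value: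
  assumes x0: "x \<noteq> 0" and c1: "Dm x v \<le> c" and c2: "c \<le> Dp x v"
  shows "\<exists>h\<in>supp_funcs x. h v = c"
proof -
  have F1: "norm x + t * c \<le> norm (x + t *\<^sub>R v)" for t
  proof -
    consider "t = 0" | "t > 0" | "t < 0" by linarith
    then show ?thesis
    proof cases
      case 1 then show ?thesis by simp
    next
      case 2
      then have "c \<le> Q x v t" using Dp_le[OF 2, of x v] c2 by linarith
      then show ?thesis using 2 unfolding Q_def by (simp add: le_divide_eq mult.commute)
    next
      case 3
      then have "Q x v t \<le> c" using Dm_ge[OF 3, of x v] c1 by linarith
      then show ?thesis using 3 unfolding Q_def by (simp add: divide_le_eq mult.commute)
    qed
  qed
  have F2: "\<bar>c\<bar> \<le> norm v"
  proof -
    have "Q x v (-1) \<le> Dm x v" by (rule Dm_ge) simp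
    moreover have "Dp x v \<le> Q x v 1" by (rule Dp_le) simp
    moreover have "\<bar>Q x v (-1)\<bar> \<le> norm v" "\<bar>Q x v 1\<bar> \<le> norm v" by (rule Q_bound)+
    ultimately show ?thesis using c1 c2 by linarith
  qed
  define g where "g = (\<lambda>(a::real, b::real). (a *\<^sub>R x + b *\<^sub>R v, a * norm x + b * c))"
  define G0 where "G0 = range g"
  have "subspace G0" unfolding subspace_def G0_def
  proof (intro conjI ballI allI)
    show "0 \<in> range g" by (rule range_eqI[of _ _ "(0,0)"]) (simp add: g_def zero_prod_def)
  next
    fix p q assume "p \<in> range g" "q \<in> range g"
    then obtain a b a' b' where "p = g (a,b)" "q = g (a',b')" by auto
    then show "p + q \<in> range g"
      by (intro range_eqI[of _ _ "(a + a', b + b')"]) (simp add: g_def algebra_simps)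
  next
    fix k p assume "p \<in> range g"
    then obtain a b where "p = g (a,b)" by auto
    then show "k *\<^sub>R p \<in> range g"
      by (intro range_eqI[of _ _ "(k * a, k * b)"]) (simp add: g_def algebra_simps)
  qed
  moreover have "\<forall>(y,r)\<in>G0. r \<le> norm y"
  proof (clarsimp simp: G0_def g_def)
    fix a b :: real
    consider "a > 0" | "a = 0" | "a < 0" by linarith
    then show "a * norm x + b * c \<le> norm (a *\<^sub>R x + b *\<^sub>R v)"
    proof cases
      case 1
      have "a *\<^sub>R x + b *\<^sub>R v = a *\<^sub>R (x + (b / a) *\<^sub>R v)" using 1 by (simp add: algebra_simps)
      then have "norm (a *\<^sub>R x + b *\<^sub>R v) = a * norm (x + (b / a) *\<^sub>R v)" using 1 by simp
      moreover have "a * (norm x + (b/a) * c) \<le> a * norm (x + (b / a) *\<^sub>R v)"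
        using F1[of "b/a"] 1 by (simp add: mult_left_mono)
      ultimately show ?thesis using 1 by (simp add: algebra_simps)
    next
      case 2
      have "b * c \<le> \<bar>b\<bar> * norm v" using F2
        by (metis abs_ge_self abs_mult abs_of_nonneg mult_left_mono abs_ge_zero order_trans)
      then show ?thesis using 2 by simp
    next
      case 3
      have eq: "b *\<^sub>R v - - (a *\<^sub>R x) = a *\<^sub>R x + b *\<^sub>R v" by (simp add: algebra_simps)
      have "norm (b *\<^sub>R v) \<le> norm (a *\<^sub>R x) + norm (a *\<^sub>R x + b *\<^sub>R v)"
        using norm_triangle_sub[of "b *\<^sub>R v" "- (a *\<^sub>R x)"] unfolding eq norm_minus_cancel .
      then have "norm (b *\<^sub>R v) - norm (a *\<^sub>R x) \<le> norm (a *\<^sub>R x + b *\<^sub>R v)"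
        by linarith
      moreover have "b * c \<le> \<bar>b\<bar> * norm v" using F2
        by (metis abs_ge_self abs_mult abs_of_nonneg mult_left_mono abs_ge_zero order_trans)
      moreover have "a * norm x = - (\<bar>a\<bar> * norm x)" using 3 by simp
      ultimately show ?thesis by simp
    qed
  qed
  ultimately obtain h where h: "linear h" "\<forall>y. h y \<le> norm y" "\<forall>(y,r)\<in>G0. h y = r"
    using HB_ext by blast
  have "g (1, 0) \<in> G0" "g (0, 1) \<in> G0" unfolding G0_def by auto
  then have "h x = norm x" "h v = c" using h(3) by (auto simp: g_def)
  then show ?thesis using supp_of_linear[OF h(1,2) _ x0] by blast
qed

lemma smooth_D:
  assumes xs: "x \<in> smooth_points" and f: "f \<in> supp_funcs x"
  shows "Dp x v = f v" "Dm x v = f v"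
proof -
  obtain g where x0: "x \<noteq> 0" and g: "supp_funcs x = {g}"
    using xs unfolding smooth_points_def by blast
  have fg: "f = g" using f g by blast
  obtain h where h: "h \<in> supp_funcs x" "h v = Dp x v" using J_value[OF x0 Dm_le_Dp order_refl] by blast
  have "h = g" using h(1) g by blast
  then show "Dp x v = f v" using h(2) fg by simp
  obtain h' where h': "h' \<in> supp_funcs x" "h' v = Dm x v" using J_value[OF x0 order_refl Dm_le_Dp] by blast
  have "h' = g" using h'(1) g by blast
  then show "Dm x v = f v" using h'(2) fg by simp
qed

definition PP :: "('a::real_normed_vector \<Rightarrow> 'a) \<Rightarrow> bool" where
  "PP T \<longleftrightarrow> (\<forall>x\<in>smooth_points. \<forall>f\<in>supp_funcs x. \<forall>v. f v = 0 \<longrightarrow> bj_orth (T x) (T v))"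

lemma step1:
  assumes lin: "bounded_linear T" and P: "PP T" and xs: "x \<in> smooth_points" and f: "f \<in> supp_funcs x"
  shows "norm (T x) * f y \<le> norm (T y) * norm x"
proof -
  interpret T: bounded_linear T by fact
  interpret F: bounded_linear f using supp_props(1)[OF f] .
  have x0: "x \<noteq> 0" using xs by (simp add: smooth_points_def)
  define a where "a = f y / norm x"
  define v where "v = y - a *\<^sub>R x"
  have fx: "f x = norm x" using supp_props(3)[OF f] .
  have "f v = 0" using x0 fx by (simp add: v_def a_def F.diff F.scale)
  then have bj: "bj_orth (T x) (T v)" using P xs f by (auto simp: PP_def)
  have fy: "f y = a * norm x" using x0 by (simp add: a_def)
  show ?thesis
  proof (cases "a = 0")
    case True then show ?thesis using fy by simp
  next
    case False
    have "T y = a *\<^sub>R T x + T v" by (simp add: v_def T.diff T.scale)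
    also have "\<dots> = a *\<^sub>R (T x + (1/a) *\<^sub>R T v)" using False by (simp add: algebra_simps)
    finally have "norm (T y) = \<bar>a\<bar> * norm (T x + (1/a) *\<^sub>R T v)" by simp
    moreover have "norm (T x) \<le> norm (T x + (1/a) *\<^sub>R T v)" using bj by (simp add: bj_orth_def)
    ultimately have "a * norm (T x) \<le> norm (T y)"
      by (metis abs_ge_self abs_ge_zero mult_left_mono order_trans mult_right_mono norm_ge_zero)
    then have "a * norm (T x) * norm x \<le> norm (T y) * norm x" by (simp add: mult_right_mono)
    then show ?thesis using fy by (simp add: algebra_simps)
  qed
qed

lemma step_ineq:
  assumes lin: "bounded_linear T" and P: "PP T" and xs: "x \<in> smooth_points" and f: "f \<in> supp_funcs x"
    and m: "0 < m" "m \<le> norm y"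
  shows "norm (T y) / norm y \<ge> norm (T x) / norm x - (onorm T / m) * (norm y - norm x - f (y - x))"
proof -
  interpret F: bounded_linear f using supp_props(1)[OF f] .
  have x0: "norm x > 0" using xs by (simp add: smooth_points_def)
  have y0: "norm y > 0" using m by linarith
  have fx: "f x = norm x" using supp_props(3)[OF f] .
  define e where "e = norm y - norm x - f (y - x)"
  have fyx: "f y = norm x + f (y - x)" using fx by (simp add: F.diff)
  have e0: "e \<ge> 0" using supp_props(2)[OF f, of y] fyx by (simp add: e_def)
  define mx where "mx = norm (T x) / norm x"
  have mx0: "0 \<le> mx" by (simp add: mx_def)
  have mxK: "mx \<le> onorm T" unfolding mx_def by (rule le_onorm[OF lin])
  have "norm (T x) * f y \<le> norm (T y) * norm x" by (rule step1[OF lin P xs f])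
  then have "mx * norm x * (norm y - e) \<le> norm (T y) * norm x"
    using x0 by (simp add: mx_def e_def fyx)
  then have A: "mx * (norm y - e) \<le> norm (T y)" using x0 by (simp add: mult.commute mult.left_commute)
  have "mx * e / norm y \<le> onorm T * e / m"
    using mxK mx0 e0 m y0 by (intro frac_le mult_mono) auto
  moreover have "norm (T y) / norm y \<ge> mx - mx * e / norm y"
  proof -
    have "mx - mx * e / norm y = mx * (norm y - e) / norm y" using y0 by (simp add: field_simps)
    also have "\<dots> \<le> norm (T y) / norm y" using A y0 by (simp add: divide_right_mono)
    finally show ?thesis .
  qed
  moreover have "onorm T * e / m = (onorm T / m) * e" by simp
  ultimately have G: "norm (T y) / norm y \<ge> mx - (onorm T / m) * e" by linarith
  then show ?thesis unfolding mx_def e_def .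
qed




lemma baire_pts:
  fixes S :: "'a::banach set"
  assumes g: "gdelta_in euclidean S" and dense: "closure S = UNIV" and e: "0 < eta"
  shows "\<exists>p. dist p x < eta \<and> (\<forall>i<n. p + real i *\<^sub>R d \<in> S)"
proof -
  from g obtain UU where U0: "countable UU" "UU \<subseteq> Collect (openin euclidean)" "\<Inter>UU = S"
    unfolding gdelta_in_alt intersection_of_def by blast
  have U: "countable UU" "\<And>u. u \<in> UU \<Longrightarrow> open u" "\<Inter>UU = S"
    using U0 by (auto simp only: open_openin mem_Collect_eq subset_iff)
  define VV where "VV = (\<lambda>(i,u). (\<lambda>p. p + real i *\<^sub>R d) -` u) ` ({..<n} \<times> UU)"
  have "countable ({..<n} \<times> UU)" by (rule countable_SIGMA) (simp_all add: U(1))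
  then have cV: "countable VV" unfolding VV_def by (rule countable_image)
  have VV: "openin euclidean V \<and> euclidean closure_of V = topspace euclidean" if "V \<in> VV" for V
  proof -
    obtain i u where iu: "u \<in> UU" "V = (\<lambda>p. p + real i *\<^sub>R d) -` u"
      using \<open>V \<in> VV\<close> unfolding VV_def by auto
    have "open V" unfolding iu(2)
      by (rule continuous_open_vimage[OF U(2)[OF iu(1)]]) (intro continuous_intros)
    moreover have "closure V = UNIV"
    proof -
      have Su: "S \<subseteq> u" using U(3) iu(1) by blast
      have "z \<in> closure V" for z
        unfolding closure_approachable
      proof (intro allI impI)
        fix e :: real assume "0 < e"
        have "z + real i *\<^sub>R d \<in> closure S" using dense by simp
        then obtain s where s: "s \<in> S" "dist s (z + real i *\<^sub>R d) < e"
          using \<open>0 < e\<close> unfolding closure_approachable by blast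
        have "s - real i *\<^sub>R d \<in> V" using s(1) Su iu(2) by auto
        moreover have "dist (s - real i *\<^sub>R d) z = dist s (z + real i *\<^sub>R d)"
          by (simp add: dist_norm algebra_simps)
        ultimately show "\<exists>y\<in>V. dist y z < e" using s(2)
          by (intro bexI[of _ "s - real i *\<^sub>R d"]) simp_all
      qed
      then show ?thesis by auto
    qed
    ultimately show ?thesis by (simp add: open_openin[symmetric])
  qed
  have "euclidean closure_of \<Inter>VV = topspace euclidean"
    by (rule Baire_category[OF disjI1[OF completely_metrizable_space_euclidean] cV VV])
  then have "x \<in> closure (\<Inter>VV)" by simp
  then obtain p where p: "p \<in> \<Inter>VV" "dist p x < eta" using e unfolding closure_approachable by blast
  have "p + real i *\<^sub>R d \<in> S" if "i < n" for i
  proof -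
    have "p + real i *\<^sub>R d \<in> u" if "u \<in> UU" for u
    proof -
      have "(\<lambda>p. p + real i *\<^sub>R d) -` u \<in> VV" unfolding VV_def
        by (rule image_eqI[of _ _ "(i,u)"]) (use \<open>i < n\<close> \<open>u \<in> UU\<close> in auto)
      then show ?thesis using p(1) by blast
    qed
    then show ?thesis using U(3) by blast
  qed
  then show ?thesis using p(2) by blast
qed

lemma chain:
  assumes lin: "bounded_linear T" and P: "PP T"
    and sm: "\<forall>i<n. p + real i *\<^sub>R d \<in> smooth_points"
    and m: "0 < m" "\<forall>i\<le>n. m \<le> norm (p + real i *\<^sub>R d)" and n: "1 \<le> n"
  shows "norm (T (p + real n *\<^sub>R d)) / norm (p + real n *\<^sub>R d)
           \<ge> norm (T p) / norm p - 2 * (onorm T / m) * norm d"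
proof -
  define pp where "pp i = p + real i *\<^sub>R d" for i
  define ph where "ph i = norm (pp i)" for i
  define mu where "mu i = norm (T (pp i)) / norm (pp i)" for i
  define C where "C = onorm T / m"
  have C0: "C \<ge> 0" using onorm_pos_le[OF lin] m(1) by (simp add: C_def)
  have "\<forall>i<n. \<exists>f. f \<in> supp_funcs (pp i)"
    using sm unfolding pp_def smooth_points_def by blast
  then obtain F where F: "\<And>i. i < n \<Longrightarrow> F i \<in> supp_funcs (pp i)" by metis
  have ppdiff: "pp (Suc i) - pp i = d" for i by (simp add: pp_def algebra_simps)
  have phd: "ph (Suc i) - ph i \<le> norm d" for i
    using norm_triangle_ineq2[of "pp (Suc i)" "pp i"] ppdiff[of i] by (simp add: ph_def)
  have E1: "mu (Suc i) \<ge> mu i - C * (ph (Suc i) - ph i - F i d)" if "i < n" for i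
  proof -
    have "pp i \<in> smooth_points" using sm that by (simp add: pp_def)
    moreover have "m \<le> norm (pp (Suc i))" using m(2) that unfolding pp_def by (metis Suc_leI)
    ultimately show ?thesis
      using step_ineq[OF lin P _ F[OF that] m(1), of "pp (Suc i)"] ppdiff[of i]
      by (simp add: mu_def ph_def C_def)
  qed
  have E2: "ph (Suc i) - F (Suc i) d \<le> ph i" if "Suc i < n" for i
  proof -
    have f: "F (Suc i) \<in> supp_funcs (pp (Suc i))" using F that by simp
    interpret bounded_linear "F (Suc i)" using supp_props(1)[OF f] .
    have "F (Suc i) (pp i) = F (Suc i) (pp (Suc i)) - F (Suc i) d"
      using ppdiff[of i] by (metis diff add_diff_cancel_left' diff_add_cancel)
    also have "\<dots> = ph (Suc i) - F (Suc i) d" using supp_props(3)[OF f] by (simp add: ph_def)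
    finally show ?thesis using supp_props(2)[OF f, of "pp i"] by (simp add: ph_def)
  qed
  have E3: "- F 0 d \<le> norm d"
    using supp_props(2)[OF F[of 0]] n by (simp add: abs_le_iff)
  have ind: "mu (Suc k) + C * (ph (Suc k) - ph k) \<ge> mu 0 - C * norm d" if "Suc k \<le> n" for k
    using that
  proof (induction k)
    case 0
    have "mu 1 \<ge> mu 0 - C * (ph 1 - ph 0 - F 0 d)" using E1[of 0] 0 by simp
    moreover have "C * (- F 0 d) \<le> C * norm d" using E3 C0 by (rule mult_left_mono)
    moreover have "C * (ph 1 - ph 0 - F 0 d) = C * (ph 1 - ph 0) + C * (- F 0 d)"
      by (simp add: algebra_simps)
    ultimately show ?case by simp
  next
    case (Suc k)
    have IH: "mu (Suc k) + C * (ph (Suc k) - ph k) \<ge> mu 0 - C * norm d" using Suc by simp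
    have a: "mu (Suc (Suc k)) \<ge> mu (Suc k) - C * (ph (Suc (Suc k)) - ph (Suc k) - F (Suc k) d)"
      using E1[of "Suc k"] Suc.prems by simp
    have "C * (- F (Suc k) d) \<le> C * (ph k - ph (Suc k))"
      using E2[of k] Suc.prems C0 by (intro mult_left_mono) auto
    moreover have "C * (ph (Suc (Suc k)) - ph (Suc k) - F (Suc k) d)
        = C * (ph (Suc (Suc k)) - ph (Suc k)) + C * (- F (Suc k) d)"
      by (simp add: algebra_simps)
    moreover have "C * (ph k - ph (Suc k)) = - (C * (ph (Suc k) - ph k))" by (simp add: algebra_simps)
    ultimately show ?case using a IH by linarith
  qed
  obtain k where k: "n = Suc k" using n by (cases n) auto
  have "mu n + C * (ph n - ph k) \<ge> mu 0 - C * norm d" using ind[of k] k by simp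
  moreover have "C * (ph n - ph k) \<le> C * norm d" using phd[of k] k C0 by (intro mult_left_mono) auto
  ultimately have "mu n \<ge> mu 0 - 2 * C * norm d" by linarith
  then show ?thesis by (simp add: mu_def pp_def C_def)
qed

lemma mu_scale:
  assumes lin: "bounded_linear T" and k: "k \<noteq> 0"
  shows "norm (T (k *\<^sub>R x)) / norm (k *\<^sub>R x) = norm (T x) / norm x"
proof -
  interpret bounded_linear T by fact
  show ?thesis using k by (simp add: scale)
qed

lemma seg_mono:
  fixes T :: "'a::banach \<Rightarrow> 'a"
  assumes lin: "bounded_linear T" and P: "PP T"
    and g: "gdelta_in euclidean (smooth_points :: 'a set)" and dense: "closure (smooth_points :: 'a set) = UNIV"
    and seg: "0 \<notin> closed_segment x y"
  shows "norm (T x) / norm x \<le> norm (T y) / norm y"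
proof (rule ccontr)
  define mu where "mu z = norm (T z) / norm z" for z
  assume "\<not> norm (T x) / norm x \<le> norm (T y) / norm y"
  then have lt: "mu y < mu x" by (simp add: mu_def)
  define e where "e = (mu x - mu y) / 3"
  have e0: "e > 0" using lt by (simp add: e_def)
  have x0: "x \<noteq> 0" and y0: "y \<noteq> 0" using seg by auto
  obtain z where z: "z \<in> closed_segment x y" "\<And>w. w \<in> closed_segment x y \<Longrightarrow> norm z \<le> norm w"
    using continuous_attains_inf[of "closed_segment x y" norm] by (auto intro: continuous_intros)
  define m0 where "m0 = norm z"
  have m0: "m0 > 0" using z(1) seg by (auto simp: m0_def)
  have cT: "continuous (at w) T" for w using linear_continuous_at[OF lin] .
  have cx: "continuous (at x) mu" unfolding mu_def using x0 cT by (intro continuous_intros) auto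
  have cy: "continuous (at y) mu" unfolding mu_def using y0 cT by (intro continuous_intros) auto
  obtain h1 where h1: "h1 > 0" "\<And>p. dist p x < h1 \<Longrightarrow> dist (mu p) (mu x) < e"
    using cx e0 unfolding continuous_at_eps_delta by blast
  obtain h2 where h2: "h2 > 0" "\<And>q. dist q y < h2 \<Longrightarrow> dist (mu q) (mu y) < e"
    using cy e0 unfolding continuous_at_eps_delta by blast
  define m where "m = m0 / 2"
  have m: "m > 0" using m0 by (simp add: m_def)
  define C where "C = onorm T / m"
  have C0: "C \<ge> 0" using onorm_pos_le[OF lin] m by (simp add: C_def)
  obtain N :: nat where N: "2 * C * norm (y - x) / e < real N" using reals_Archimedean2 by blast
  define n where "n = Suc N"
  have n1: "1 \<le> n" by (simp add: n_def)
  have npos: "real n > 0" by (simp add: n_def)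
  define d where "d = (1 / real n) *\<^sub>R (y - x)"
  define eta where "eta = min (min h1 h2) m"
  have eta: "eta > 0" using h1 h2 m by (simp add: eta_def)
  obtain p where p: "dist p x < eta" "\<forall>i<n. p + real i *\<^sub>R d \<in> smooth_points"
    using baire_pts[OF g dense eta] by blast
  have bnd: "\<forall>i\<le>n. m \<le> norm (p + real i *\<^sub>R d)"
  proof (intro allI impI)
    fix i assume i: "i \<le> n"
    define u where "u = real i / real n"
    have u: "0 \<le> u" "u \<le> 1" using i npos by (auto simp: u_def)
    have "x + real i *\<^sub>R d = (1 - u) *\<^sub>R x + u *\<^sub>R y"
      using npos by (simp add: d_def u_def algebra_simps)
    then have "x + real i *\<^sub>R d \<in> closed_segment x y" using u unfolding in_segment by blast
    then have "m0 \<le> norm (x + real i *\<^sub>R d)" using z(2) by (simp add: m0_def)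
    moreover have "norm (x + real i *\<^sub>R d) \<le> norm (p + real i *\<^sub>R d) + norm (p - x)"
      using norm_triangle_sub[of "x + real i *\<^sub>R d" "p + real i *\<^sub>R d"] by (simp add: norm_minus_commute)
    moreover have "norm (p - x) < m" using p(1) by (simp add: eta_def dist_norm)
    ultimately show "m \<le> norm (p + real i *\<^sub>R d)" by (simp add: m_def)
  qed
  have ch: "mu (p + real n *\<^sub>R d) \<ge> mu p - 2 * C * norm d"
    using chain[OF lin P p(2) m bnd n1] by (simp add: mu_def C_def)
  have pnd: "p + real n *\<^sub>R d = p + (y - x)" using npos by (simp add: d_def)
  have "dist (p + (y - x)) y = dist p x" by (simp add: dist_norm algebra_simps)
  then have a1: "mu (p + (y - x)) < mu y + e" using h2(2)[of "p + (y - x)"] p(1)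
    by (simp add: eta_def dist_real_def abs_less_iff)
  have a2: "mu x - e < mu p" using h1(2)[of p] p(1) by (simp add: eta_def dist_real_def abs_less_iff)
  have "norm d = norm (y - x) / real n" using npos by (simp add: d_def)
  then have "2 * C * norm d = (2 * C * norm (y - x)) / real n" by simp
  also have "\<dots> < e"
  proof -
    have "2 * C * norm (y - x) < e * real N" using N e0 by (simp add: divide_less_eq mult.commute)
    also have "\<dots> \<le> e * real n" using e0 by (simp add: n_def)
    finally show ?thesis using npos by (simp add: divide_less_eq mult.commute)
  qed
  finally have "2 * C * norm d < e" .
  moreover have "mu (p + (y - x)) \<ge> mu p - 2 * C * norm d" using ch pnd by simp
  moreover have "3 * e = mu x - mu y" using e_def by simp
  ultimately show False using a1 a2 by linarith
qed

lemma PP_iso: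
  fixes T :: "'a::banach \<Rightarrow> 'a"
  assumes lin: "bounded_linear T" and P: "PP T"
    and g: "gdelta_in euclidean (smooth_points :: 'a set)" and dense: "closure (smooth_points :: 'a set) = UNIV"
    and nz: "T \<noteq> (\<lambda>x. 0)"
  shows "\<exists>c::real. \<forall>x. norm (T x) = c * norm x"
proof -
  interpret bounded_linear T by fact
  obtain x0 where "T x0 \<noteq> 0" using nz by auto
  then have x0: "x0 \<noteq> 0" by auto
  define c where "c = norm (T x0) / norm x0"
  have eq: "norm (T x) / norm x = c" if x: "x \<noteq> 0" for x
  proof (cases "0 \<in> closed_segment x0 x")
    case True
    then obtain u where u: "0 \<le> u" "u \<le> 1" "0 = (1 - u) *\<^sub>R x0 + u *\<^sub>R x"
      unfolding in_segment by blast
    have u0: "u \<noteq> 0" using u x0 by auto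
    define k where "k = - (inverse u * (1 - u))"
    have xk: "x = k *\<^sub>R x0"
    proof -
      have "u *\<^sub>R x = - ((1 - u) *\<^sub>R x0)" using u(3) by (simp add: eq_neg_iff_add_eq_0 add.commute)
      then have "(1/u) *\<^sub>R (u *\<^sub>R x) = (1/u) *\<^sub>R (- ((1 - u) *\<^sub>R x0))" by simp
      then show ?thesis using u0 by (simp add: divide_inverse k_def)
    qed
    have k0: "k \<noteq> 0" using xk x by auto
    show ?thesis unfolding xk c_def by (rule mu_scale[OF lin k0])
  next
    case False
    then have "0 \<notin> closed_segment x x0" by (simp add: closed_segment_commute)
    with False show ?thesis using seg_mono[OF lin P g dense] c_def by (meson order_antisym)
  qed
  show ?thesis
  proof (intro exI allI)
    fix x show "norm (T x) = c * norm x"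
    proof (cases "x = 0")
      case True then show ?thesis by (simp add: zero)
    next
      case False then show ?thesis using eq[OF False] by (simp add: field_simps)
    qed
  qed
qed




lemma iso_D:
  assumes lin: "bounded_linear T" and c: "\<forall>x. norm (T x) = c * norm x"
  shows "Dp (T x) (T v) = c * Dp x v" "Dm (T x) (T v) = c * Dm x v"
proof -
  interpret bounded_linear T by fact
  have QT: "Q (T x) (T v) = (\<lambda>t. c * Q x v t)"
  proof
    fix t
    have "T x + t *\<^sub>R T v = T (x + t *\<^sub>R v)" by (simp add: add scale)
    then show "Q (T x) (T v) t = c * Q x v t" unfolding Q_def using c by (simp add: algebra_simps)
  qed
  have "(Q (T x) (T v) \<longlongrightarrow> c * Dp x v) (at_right 0)"
    unfolding QT by (intro tendsto_mult_left Dp_tendsto)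
  then show "Dp (T x) (T v) = c * Dp x v"
    using Dp_tendsto[of "T x" "T v"] by (intro tendsto_unique[of "at_right 0"]) auto
  have "(Q (T x) (T v) \<longlongrightarrow> c * Dm x v) (at_left 0)"
    unfolding QT by (intro tendsto_mult_left Dm_tendsto)
  then show "Dm (T x) (T v) = c * Dm x v"
    using Dm_tendsto[of "T x" "T v"] by (intro tendsto_unique[of "at_left 0"]) auto
qed

lemma iso_rho:
  assumes lin: "bounded_linear T" and c: "\<forall>x. norm (T x) = c * norm x"
  shows "rho_plus (T x) (T v) = c * c * rho_plus x v"
        "rho_minus (T x) (T v) = c * c * rho_minus x v"
        "rho (T x) (T v) = c * c * rho x v"
proof -
  show a: "rho_plus (T x) (T v) = c * c * rho_plus x v"
    using iso_D[OF assms] c by (simp add: rho_plus_eq)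
  show b: "rho_minus (T x) (T v) = c * c * rho_minus x v"
    using iso_D[OF assms] c by (simp add: rho_minus_eq)
  show "rho (T x) (T v) = c * c * rho x v"
    unfolding rho_def a b by (simp add: algebra_simps)
qed

lemma iso_c_nonneg:
  assumes c: "\<forall>x. norm (T x) = c * norm x" and nz: "T \<noteq> (\<lambda>x. 0)"
  shows "c \<ge> 0"
proof -
  obtain z where "T z \<noteq> 0" using nz by auto
  then have "0 < c * norm z" using c by (metis zero_less_norm_iff)
  then show ?thesis by (simp add: zero_less_mult_iff)
qed

lemma iso_pres:
  assumes lin: "bounded_linear T" and c: "\<forall>x. norm (T x) = c * norm x" and c0: "c \<ge> 0"
  shows "preserves_bj_at T x"
  unfolding preserves_bj_at_def bj_orth_def
proof (intro allI impI)
  interpret bounded_linear T by fact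
  fix v l assume b: "\<forall>l. norm x \<le> norm (x + l *\<^sub>R v)"
  have "T x + l *\<^sub>R T v = T (x + l *\<^sub>R v)" by (simp add: add scale)
  then show "norm (T x) \<le> norm (T x + l *\<^sub>R T v)"
    using c b c0 by (simp add: mult_left_mono)
qed

lemma smooth_PP_of:
  fixes T :: "'a::real_normed_vector \<Rightarrow> 'a"
  assumes "\<And>(x::'a) f v. x \<in> smooth_points \<Longrightarrow> f \<in> supp_funcs x \<Longrightarrow> f v = 0 \<Longrightarrow> bj_orth (T x) (T v)"
  shows "PP T"
  using assms unfolding PP_def by blast

lemma rho_pres_PP:
  fixes T :: "'a::real_normed_vector \<Rightarrow> 'a"
  assumes "\<forall>x\<in>smooth_points. preserves_rho_plus_at T x"
  shows "PP T"
proof (rule smooth_PP_of)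
  fix x :: 'a and f v assume xs: "x \<in> smooth_points" and f: "f \<in> supp_funcs x" and fv: "f v = 0"
  have "rho_plus x v = 0" using smooth_D[OF xs f, of v] fv by (simp add: rho_plus_eq)
  then have r: "rho_plus (T x) (T v) = 0" using assms xs by (auto simp: preserves_rho_plus_at_def)
  show "bj_orth (T x) (T v)"
  proof (cases "T x = 0")
    case True then show ?thesis by (simp add: bj_zero)
  next
    case False
    then have "Dp (T x) (T v) = 0" using r by (simp add: rho_plus_eq)
    then show ?thesis using Dm_le_Dp[of "T x" "T v"] by (intro bj_of_D) auto
  qed
qed

lemma rho_minus_pres_PP:
  fixes T :: "'a::real_normed_vector \<Rightarrow> 'a"
  assumes "\<forall>x\<in>smooth_points. preserves_rho_minus_at T x"
  shows "PP T"
proof (rule smooth_PP_of)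
  fix x :: 'a and f v assume xs: "x \<in> smooth_points" and f: "f \<in> supp_funcs x" and fv: "f v = 0"
  have "rho_minus x v = 0" using smooth_D[OF xs f, of v] fv by (simp add: rho_minus_eq)
  then have r: "rho_minus (T x) (T v) = 0" using assms xs by (auto simp: preserves_rho_minus_at_def)
  show "bj_orth (T x) (T v)"
  proof (cases "T x = 0")
    case True then show ?thesis by (simp add: bj_zero)
  next
    case False
    then have "Dm (T x) (T v) = 0" using r by (simp add: rho_minus_eq)
    then show ?thesis using Dm_le_Dp[of "T x" "T v"] by (intro bj_of_D) auto
  qed
qed

lemma rho_mid_pres_PP:
  fixes T :: "'a::real_normed_vector \<Rightarrow> 'a"
  assumes "\<forall>x\<in>smooth_points. preserves_rho_at T x"
  shows "PP T"
proof (rule smooth_PP_of)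
  fix x :: 'a and f v assume xs: "x \<in> smooth_points" and f: "f \<in> supp_funcs x" and fv: "f v = 0"
  have "rho x v = 0" using smooth_D[OF xs f, of v] fv by (simp add: rho_def rho_plus_eq rho_minus_eq)
  then have r: "rho (T x) (T v) = 0" using assms xs by (auto simp: preserves_rho_at_def)
  show "bj_orth (T x) (T v)"
  proof (cases "T x = 0")
    case True then show ?thesis by (simp add: bj_zero)
  next
    case False
    then have "Dp (T x) (T v) + Dm (T x) (T v) = 0" using r
      by (simp add: rho_def rho_plus_eq rho_minus_eq distrib_left[symmetric])
    then show ?thesis using Dm_le_Dp[of "T x" "T v"] by (intro bj_of_D) auto
  qed
qed

lemma bj_pres_PP:
  fixes T :: "'a::real_normed_vector \<Rightarrow> 'a"
  assumes "\<forall>x\<in>smooth_points. preserves_bj_at T x"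
  shows "PP T"
proof (rule smooth_PP_of)
  fix x :: 'a and f v assume xs: "x \<in> smooth_points" and f: "f \<in> supp_funcs x" and fv: "f v = 0"
  have "bj_orth x v" by (rule supp_bj[OF f fv])
  then show "bj_orth (T x) (T v)" using assms xs by (auto simp: preserves_bj_at_def)
qed

lemma dense_PP:
  fixes T :: "'a::banach \<Rightarrow> 'a"
  assumes lin: "bounded_linear T" and dU: "closure U = UNIV" and pres: "\<forall>u\<in>U. preserves_bj_at T u"
  shows "PP T"
proof (rule smooth_PP_of)
  interpret TL: bounded_linear T by fact
  fix x :: 'a and f v assume xs: "x \<in> smooth_points" and f: "f \<in> supp_funcs x" and fv: "f v = 0"
  have x0: "x \<noteq> 0" using xs by (simp add: smooth_points_def)
  show "bj_orth (T x) (T v)"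
    unfolding bj_orth_def
  proof (rule allI, rule ccontr)
    fix l :: real
    assume neg: "\<not> norm (T x) \<le> norm (T x + l *\<^sub>R T v)"
    define gam where "gam = norm (T x) - norm (T x + l *\<^sub>R T v)"
    have gam: "gam > 0" using neg by (simp add: gam_def)
    define K where "K = onorm T"
    have K0: "K \<ge> 0" using onorm_pos_le[OF lin] by (simp add: K_def)
    have KT: "norm (T z) \<le> K * norm z" for z using onorm[OF lin] by (simp add: K_def)
    define del where "del = gam / ((2 + \<bar>l\<bar>) * K + 1)"
    have den: "(2 + \<bar>l\<bar>) * K + 1 > 0" using K0 by (simp add: add_nonneg_pos)
    have del: "del > 0" using gam den by (simp add: del_def)
    have "del * ((2 + \<bar>l\<bar>) * K + 1) = gam" using den by (simp add: del_def)
    then have del_eq: "(2 + \<bar>l\<bar>) * K * del + del = gam" by (simp add: algebra_simps)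
    have Dp0: "Dp x v = 0" and Dm0: "Dm x v = 0" using smooth_D[OF xs f, of v] fv by auto
    obtain t where t: "t > 0" "Q x v t < del / 2" using Dp_approx[of "del/2" x v] del Dp0 by auto
    obtain s where s: "s < 0" "- (del / 2) < Q x v s" using Dm_approx[of "del/2" x v] del Dm0 by auto
    define r where "r = min (min (norm x) del) (min (t * del / 4) ((- s) * del / 4))"
    have "s * del < 0" using s(1) del by (simp add: mult_neg_pos)
    then have r: "r > 0" using x0 del t s by (simp add: r_def)
    have "x \<in> closure U" using dU by simp
    then obtain u where u: "u \<in> U" "dist u x < r" using r unfolding closure_approachable by blast
    have ux: "norm (u - x) < r" using u(2) by (simp add: dist_norm)
    have u0: "u \<noteq> 0" using ux by (auto simp: r_def)
    obtain g where g: "g \<in> supp_funcs u" using J_exists[OF u0] by blast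
    interpret G: bounded_linear g using supp_props(1)[OF g] .
    have "\<bar>Q u v t - Q x v t\<bar> \<le> 2 * norm (u - x) / \<bar>t\<bar>" by (rule Q_diff)
    moreover have "2 * norm (u - x) / \<bar>t\<bar> < del / 2"
    proof -
      have "norm (u - x) < t * del / 4" using ux by (simp add: r_def)
      then show ?thesis using t(1) by (simp add: divide_less_eq algebra_simps)
    qed
    ultimately have Qu1: "Q u v t < del" using t(2) by linarith
    have "\<bar>Q u v s - Q x v s\<bar> \<le> 2 * norm (u - x) / \<bar>s\<bar>" by (rule Q_diff)
    moreover have "2 * norm (u - x) / \<bar>s\<bar> < del / 2"
    proof -
      define a where "a = - s"
      have a: "a > 0" "\<bar>s\<bar> = a" using s(1) by (auto simp: a_def)
      have "norm (u - x) < a * del / 4" using ux by (simp add: r_def a_def)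
      then show ?thesis using a by (simp add: divide_less_eq algebra_simps)
    qed
    ultimately have Qu2: "- del < Q u v s" using s(2) by linarith
    have gv: "\<bar>g v\<bar> < del" using supp_Q(1)[OF g t(1), of v] supp_Q(2)[OF g s(1), of v] Qu1 Qu2
      by linarith
    define w where "w = v - (g v / norm u) *\<^sub>R u"
    have "g w = 0" using u0 supp_props(3)[OF g] by (simp add: w_def G.diff G.scale)
    then have "bj_orth u w" by (rule supp_bj[OF g])
    then have "bj_orth (T u) (T w)" using pres u(1) by (auto simp: preserves_bj_at_def)
    then have A: "norm (T u) \<le> norm (T u + l *\<^sub>R T w)" by (simp add: bj_orth_def)
    have wv: "norm (w - v) = \<bar>g v\<bar>" using u0 by (simp add: w_def)
    have d1: "T (u - x) = T u - T x" and d2: "T (w - v) = T w - T v" by (rule TL.diff)+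
    have eqn: "T u + l *\<^sub>R T w = (T x + l *\<^sub>R T v) + (T (u - x) + l *\<^sub>R T (w - v))"
      unfolding d1 d2 by (simp add: algebra_simps)
    have tr1: "norm ((T x + l *\<^sub>R T v) + (T (u - x) + l *\<^sub>R T (w - v)))
       \<le> norm (T x + l *\<^sub>R T v) + norm (T (u - x) + l *\<^sub>R T (w - v))" by (rule norm_triangle_ineq)
    have tr2: "norm (T (u - x) + l *\<^sub>R T (w - v)) \<le> norm (T (u - x)) + \<bar>l\<bar> * norm (T (w - v))"
      using norm_triangle_ineq[of "T (u - x)" "l *\<^sub>R T (w - v)"] by simp
    have "norm (T u + l *\<^sub>R T w) \<le> norm (T x + l *\<^sub>R T v) + (norm (T (u - x)) + \<bar>l\<bar> * norm (T (w - v)))"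
      unfolding eqn using tr1 tr2 by linarith
    moreover have "norm (T x) \<le> norm (T u) + norm (T (u - x))"
      using norm_triangle_ineq[of "T u" "- T (u - x)"] unfolding d1 by (simp add: norm_minus_commute)
    moreover have "norm (T (u - x)) \<le> K * del"
    proof -
      have "norm (u - x) \<le> del" using ux by (simp add: r_def)
      then show ?thesis using KT[of "u - x"] K0 by (meson mult_left_mono order_trans)
    qed
    moreover have "\<bar>l\<bar> * norm (T (w - v)) \<le> \<bar>l\<bar> * (K * del)"
    proof -
      have "norm (T (w - v)) \<le> K * del"
        using KT[of "w - v"] K0 wv gv by (metis less_imp_le mult_left_mono order_trans)
      then show ?thesis by (simp add: mult_left_mono)
    qed
    moreover have "(2 + \<bar>l\<bar>) * K * del = 2 * (K * del) + \<bar>l\<bar> * (K * del)" by (simp add: algebra_simps)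
    ultimately show False using A del_eq del gam_def by linarith
  qed
qed

lemma hyper_dense:
  fixes T :: "'a::real_normed_vector \<Rightarrow> 'a"
  assumes lin: "bounded_linear T" and H: "affine_hyperplane_off0 H" and pres: "\<forall>x\<in>H. preserves_bj_at T x"
  shows "\<exists>U. closure U = UNIV \<and> (\<forall>x\<in>U. preserves_bj_at T x)"
proof -
  interpret TL: bounded_linear T by fact
  obtain phi c where pc: "bounded_linear phi" "phi \<noteq> (\<lambda>x. 0)" "c \<noteq> (0::real)" "H = {x. phi x = c}"
    using H unfolding affine_hyperplane_off0_def by blast
  interpret PH: bounded_linear phi by fact
  obtain z where z: "phi z \<noteq> 0" using pc(2) by auto
  define U where "U = {x. phi x \<noteq> 0}"
  have "closure U = UNIV"
  proof -
    have "x \<in> closure U" for x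
      unfolding closure_approachable
    proof (intro allI impI)
      fix e :: real assume e: "0 < e"
      show "\<exists>y\<in>U. dist y x < e"
      proof (cases "phi x = 0")
        case False then show ?thesis using e by (intro bexI[of _ x]) (auto simp: U_def)
      next
        case True
        define k where "k = e / (2 * (norm z + 1))"
        have k: "k > 0" using e by (simp add: k_def add_nonneg_pos)
        have "phi (x + k *\<^sub>R z) = k * phi z" using True by (simp add: PH.add PH.scale)
        then have "x + k *\<^sub>R z \<in> U" using k z by (simp add: U_def)
        moreover have "dist (x + k *\<^sub>R z) x < e"
        proof -
          have "dist (x + k *\<^sub>R z) x = k * norm z" using k by (simp add: dist_norm)
          also have "\<dots> < k * (2 * (norm z + 1))"
            using k norm_ge_zero[of z] by (intro mult_strict_left_mono) (smt (verit), simp)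
          also have "\<dots> = e"
            using norm_ge_zero[of z] unfolding k_def by (smt (verit) nonzero_eq_divide_eq)
          finally show ?thesis .
        qed
        ultimately show ?thesis by blast
      qed
    qed
    then show ?thesis by auto
  qed
  moreover have "preserves_bj_at T u" if "u \<in> U" for u
  proof -
    define a where "a = c / phi u"
    have pu: "phi u \<noteq> 0" using that by (simp add: U_def)
    have a0: "a \<noteq> 0" using pu pc(3) by (simp add: a_def)
    have "phi (a *\<^sub>R u) = c" using pu by (simp add: a_def PH.scale)
    then have "preserves_bj_at T (a *\<^sub>R u)" using pres pc(4) by auto
    then show ?thesis
      unfolding preserves_bj_at_def
    proof (intro allI impI)
      fix v assume P: "\<forall>v. bj_orth (a *\<^sub>R u) v \<longrightarrow> bj_orth (T (a *\<^sub>R u)) (T v)" and b: "bj_orth u v"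
      have "bj_orth (a *\<^sub>R u) v" unfolding bj_orth_def
      proof
        fix l :: real
        have "a *\<^sub>R u + l *\<^sub>R v = a *\<^sub>R (u + (l / a) *\<^sub>R v)" using a0 by (simp add: algebra_simps)
        then show "norm (a *\<^sub>R u) \<le> norm (a *\<^sub>R u + l *\<^sub>R v)"
          using b unfolding bj_orth_def by (simp add: mult_left_mono)
      qed
      then have B: "bj_orth (a *\<^sub>R T u) (T v)" using P by (simp add: TL.scale)
      show "bj_orth (T u) (T v)" unfolding bj_orth_def
      proof
        fix l :: real
        have "norm (a *\<^sub>R T u) \<le> norm (a *\<^sub>R T u + (a * l) *\<^sub>R T v)"
          using B unfolding bj_orth_def by blast
        moreover have "a *\<^sub>R T u + (a * l) *\<^sub>R T v = a *\<^sub>R (T u + l *\<^sub>R T v)" by (simp add: algebra_simps)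
        ultimately show "norm (T u) \<le> norm (T u + l *\<^sub>R T v)" using a0 by simp
      qed
    qed
  qed
  ultimately show ?thesis by blast
qed

lemma exists_hyper:
  fixes T :: "'a::real_normed_vector \<Rightarrow> 'a"
  assumes dense: "closure (smooth_points :: 'a set) = UNIV"
  shows "\<exists>H::'a set. affine_hyperplane_off0 H"
proof -
  have "smooth_points \<noteq> ({} :: 'a set)" using dense by auto
  then obtain x0 :: 'a where xs: "x0 \<in> smooth_points" by blast
  then obtain f where f: "f \<in> supp_funcs x0" and x0: "x0 \<noteq> 0" unfolding smooth_points_def by auto
  have "f x0 \<noteq> 0" using supp_props(3)[OF f] x0 by simp
  then have "f \<noteq> (\<lambda>x. 0)" by (metis)
  moreover have "norm x0 \<noteq> 0" using x0 by simp
  ultimately have "affine_hyperplane_off0 {x. f x = norm x0}"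
    unfolding affine_hyperplane_off0_def using supp_props(1)[OF f] by blast
  then show ?thesis by blast
qed



theorem mainTheorem9:
  fixes T :: "'a::banach \<Rightarrow> 'a"
  assumes dense_sm: "closure (smooth_points :: 'a set) = UNIV"
    and gdelta_sm: "gdelta_in euclidean (smooth_points :: 'a set)"
    and lin: "bounded_linear T"
    and nz: "T \<noteq> (\<lambda>x. 0)"
  shows
   "((\<forall>x\<in>smooth_points. preserves_bj_at T x) \<longleftrightarrow>
       (\<exists>U. closure U = UNIV \<and> (\<forall>x\<in>U. preserves_bj_at T x)))
  \<and> ((\<forall>x\<in>smooth_points. preserves_bj_at T x) \<longleftrightarrow>
       (\<exists>H. affine_hyperplane_off0 H \<and> (\<forall>x\<in>H. preserves_bj_at T x)))
  \<and> ((\<forall>x\<in>smooth_points. preserves_bj_at T x) \<longleftrightarrow>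
       (\<forall>x\<in>smooth_points. preserves_rho_plus_at T x))
  \<and> ((\<forall>x\<in>smooth_points. preserves_bj_at T x) \<longleftrightarrow>
       (\<forall>x\<in>smooth_points. preserves_rho_minus_at T x))
  \<and> ((\<forall>x\<in>smooth_points. preserves_bj_at T x) \<longleftrightarrow>
       (\<forall>x\<in>smooth_points. preserves_rho_at T x))
  \<and> ((\<forall>x\<in>smooth_points. preserves_bj_at T x) \<longleftrightarrow>
       (\<exists>c::real. \<forall>x. norm (T x) = c * norm x))"
proof -
  let ?A = "\<forall>x\<in>smooth_points. preserves_bj_at T x"
  let ?B = "\<exists>c::real. \<forall>x. norm (T x) = c * norm x"
  have PB: "?B" if "PP T" using PP_iso[OF lin that gdelta_sm dense_sm nz] .
  have Ball: "\<forall>x. preserves_bj_at T x" if "?B"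
  proof -
    obtain c where c: "\<forall>x. norm (T x) = c * norm x" using \<open>?B\<close> by blast
    have "c \<ge> 0" by (rule iso_c_nonneg[OF c nz])
    then show ?thesis using iso_pres[OF lin c] by blast
  qed
  have AB: "?A \<longleftrightarrow> ?B"
  proof
    assume ?A then show ?B using PB bj_pres_PP by blast
  next
    assume ?B then show ?A using Ball by blast
  qed
  have U: "?A \<longleftrightarrow> (\<exists>U. closure U = UNIV \<and> (\<forall>x\<in>U. preserves_bj_at T x))"
  proof
    assume ?A
    then have ?B using AB by blast
    then show "\<exists>U. closure U = UNIV \<and> (\<forall>x\<in>U. preserves_bj_at T x)"
      using Ball by (intro exI[of _ UNIV]) auto
  next
    assume "\<exists>U. closure U = UNIV \<and> (\<forall>x\<in>U. preserves_bj_at T x)"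
    then obtain U where "closure U = UNIV" "\<forall>x\<in>U. preserves_bj_at T x" by blast
    then have "PP T" by (rule dense_PP[OF lin])
    then show ?A using PB AB by blast
  qed
  have H: "?A \<longleftrightarrow> (\<exists>H. affine_hyperplane_off0 H \<and> (\<forall>x\<in>H. preserves_bj_at T x))"
  proof
    assume ?A
    then have ?B using AB by blast
    moreover obtain H :: "'a set" where "affine_hyperplane_off0 H" using exists_hyper[OF dense_sm] by blast
    ultimately show "\<exists>H. affine_hyperplane_off0 H \<and> (\<forall>x\<in>H. preserves_bj_at T x)"
      using Ball by blast
  next
    assume "\<exists>H. affine_hyperplane_off0 H \<and> (\<forall>x\<in>H. preserves_bj_at T x)"
    then obtain H where "affine_hyperplane_off0 H" "\<forall>x\<in>H. preserves_bj_at T x" by blast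
    then obtain U where "closure U = UNIV" "\<forall>x\<in>U. preserves_bj_at T x"
      using hyper_dense[OF lin] by blast
    then have "PP T" by (rule dense_PP[OF lin])
    then show ?A using PB AB by blast
  qed
  have R1: "?A \<longleftrightarrow> (\<forall>x\<in>smooth_points. preserves_rho_plus_at T x)"
  proof
    assume ?A
    then obtain c where c: "\<forall>x. norm (T x) = c * norm x" using AB by blast
    show "\<forall>x\<in>smooth_points. preserves_rho_plus_at T x"
      unfolding preserves_rho_plus_at_def using iso_rho(1)[OF lin c] by simp
  next
    assume "\<forall>x\<in>smooth_points. preserves_rho_plus_at T x"
    then show ?A using rho_pres_PP PB AB by blast
  qed
  have R2: "?A \<longleftrightarrow> (\<forall>x\<in>smooth_points. preserves_rho_minus_at T x)"
  proof
    assume ?A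
    then obtain c where c: "\<forall>x. norm (T x) = c * norm x" using AB by blast
    show "\<forall>x\<in>smooth_points. preserves_rho_minus_at T x"
      unfolding preserves_rho_minus_at_def using iso_rho(2)[OF lin c] by simp
  next
    assume "\<forall>x\<in>smooth_points. preserves_rho_minus_at T x"
    then show ?A using rho_minus_pres_PP PB AB by blast
  qed
  have R3: "?A \<longleftrightarrow> (\<forall>x\<in>smooth_points. preserves_rho_at T x)"
  proof
    assume ?A
    then obtain c where c: "\<forall>x. norm (T x) = c * norm x" using AB by blast
    show "\<forall>x\<in>smooth_points. preserves_rho_at T x"
      unfolding preserves_rho_at_def using iso_rho(3)[OF lin c] by simp
  next
    assume "\<forall>x\<in>smooth_points. preserves_rho_at T x"
    then show ?A using rho_mid_pres_PP PB AB by blast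
  qed
  show ?thesis using U H R1 R2 R3 AB by blast
qed


end
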